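(* Let $m,n$ be positive integers and $x\ge 2$ real. Define $\alpha_j\ge0$ ($1\le j\le n$) and $\beta_k\ge0$ ($1\le k\le m$) by $$\cosh\frac{\alpha_j}{2}=\frac{x}{\cos\frac{\pi(2j-1)}{4n}}-\cos\frac{\pi(2j-1)}{4n},\qquad \cosh\frac{\beta_k}{2}=\frac{x}{\cos\frac{\pi(2k-1)}{4m}}-\cos\frac{\pi(2k-1)}{4m}.$$ Then $$\prod_{j=1}^n\left(\cosh(m\alpha_j)+\cos\frac{m\pi(2j-1)}{2n}\right)=\prod_{k=1}^m\left(\cosh(n\beta_k)+\cos\frac{n\pi(2k-1)}{2m}\right).$$ *)

theory Defs
  imports "HOL-Analysis.Analysis"
begin

end

theory Submission
  imports Defs "HOL-Computational_Algebra.Fundamental_Theorem_Algebra"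
begin

lemma roots_prod_poly:
  assumes N: "N > 0"
  shows "(\<Prod>z | z ^ N = 1. [:-z, 1:]) = (monom (1::complex) N - 1)"
proof -
  define p where "p = (monom (1::complex) N - 1)"
  have cN: "coeff p N = 1" using N unfolding p_def by (simp add: coeff_monom)
  have deg: "degree p = N"
  proof (rule antisym)
    show "degree p \<le> N" unfolding p_def
      by (rule degree_diff_le) (auto simp: degree_monom_le)
    show "N \<le> degree p" using cN by (intro le_degree) simp
  qed
  have lc: "lead_coeff p = 1" using cN deg by simp
  have rts: "{z. poly p z = 0} = {z. z ^ N = 1}" unfolding p_def by (auto simp: poly_monom)
  have "rsquarefree p"
    unfolding rsquarefree_roots
  proof (intro allI notI)
    fix a assume a: "poly p a = 0 \<and> poly (pderiv p) a = 0"
    hence "a ^ N = 1" unfolding p_def by (simp add: poly_monom)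
    hence "a \<noteq> 0" using N by (metis power_0_left zero_neq_one neq0_conv)
    moreover have "poly (pderiv p) a = of_nat N * a ^ (N - 1)"
      unfolding p_def by (simp add: pderiv_diff pderiv_monom poly_monom)
    ultimately show False using a N by simp
  qed
  from complex_poly_decompose_rsquarefree[OF this] lc rts
  show ?thesis unfolding p_def by simp
qed

lemma roots_prod:
  assumes N: "N > 0"
  shows "(\<Prod>k<N. w - cis (2 * pi * real k / real N)) = w ^ N - 1"
proof -
  have "(\<Prod>k<N. w - cis (2 * pi * real k / real N)) = (\<Prod>z | z ^ N = 1. w - z)"
    by (rule prod.reindex_bij_betw[OF Complex.bij_betw_roots_unity[OF N]])
  also have "\<dots> = poly (\<Prod>z | z ^ N = 1. [:-z, 1:]) w"
    by (simp add: poly_prod)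
  also have "\<dots> = w ^ N - 1" using roots_prod_poly[OF N] by (simp add: poly_monom)
  finally show ?thesis .
qed

lemma roots_prod2:
  assumes N: "N > 0"
  shows "(\<Prod>k<N. z - cis (\<psi> + 2 * pi * real k / real N)) = z ^ N - cis (real N * \<psi>)"
proof -
  define w where "w = z / cis \<psi>"
  have "(\<Prod>k<N. z - cis (\<psi> + 2 * pi * real k / real N))
      = (\<Prod>k<N. cis \<psi> * (w - cis (2 * pi * real k / real N)))"
    by (intro prod.cong refl) (simp add: w_def algebra_simps cis_mult)
  also have "\<dots> = cis \<psi> ^ N * (w ^ N - 1)"
    by (simp add: prod.distrib roots_prod[OF N])
  also have "\<dots> = z ^ N - cis (real N * \<psi>)"
  proof -
    have c0: "cis \<psi> ^ N \<noteq> 0" by simp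
    have "cis \<psi> ^ N * (w ^ N - 1) = z ^ N - cis \<psi> ^ N"
      using c0 by (simp add: w_def power_divide algebra_simps)
    thus ?thesis by (simp only: Complex.DeMoivre)
  qed
  finally show ?thesis .
qed

lemma cosh_cos_complex:
  fixes t u :: real
  shows "complex_of_real (cosh t - cos u) =
    (complex_of_real (exp t) - cis u) * (complex_of_real (exp t) - cis (-u)) / (2 * complex_of_real (exp t))"
proof -
  have e: "exp t \<noteq> 0" by simp
  have "(complex_of_real (exp t) - cis u) * (complex_of_real (exp t) - cis (-u))
      = complex_of_real (exp t ^ 2 - 2 * exp t * cos u + 1)"
    by (simp add: complex_eq_iff power2_eq_square algebra_simps cos_squared_eq)
  moreover have "cosh t - cos u = (exp t ^ 2 - 2 * exp t * cos u + 1) / (2 * exp t)"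
    using e by (simp add: cosh_def exp_minus field_simps power2_eq_square)
  ultimately show ?thesis by simp
qed

lemma cheb:
  assumes N: "N > 0"
  shows "cosh (real N * t) - cos (real N * \<psi>)
       = 2 ^ (N - 1) * (\<Prod>k<N. cosh t - cos (\<psi> + 2 * pi * real k / real N))"
proof -
  define z where "z = complex_of_real (exp t)"
  have z0: "z \<noteq> 0" by (simp add: z_def)
  have cz: "cnj z = z" by (simp add: z_def)
  define X where "X = (z ^ N - cis (real N * \<psi>)) * (z ^ N - cis (- (real N * \<psi>)))"
  have P1: "(\<Prod>k<N. z - cis (\<psi> + 2 * pi * real k / real N)) = z ^ N - cis (real N * \<psi>)"
    by (rule roots_prod2[OF N])
  have P2: "(\<Prod>k<N. z - cis (- (\<psi> + 2 * pi * real k / real N))) = z ^ N - cis (- (real N * \<psi>))"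
  proof -
    have "(\<Prod>k<N. z - cis (- (\<psi> + 2 * pi * real k / real N))) = cnj (\<Prod>k<N. z - cis (\<psi> + 2 * pi * real k / real N))"
      by (simp add: cz cis_cnj)
    also have "\<dots> = cnj (z ^ N - cis (real N * \<psi>))" by (simp only: P1)
    also have "\<dots> = z ^ N - cis (- (real N * \<psi>))" by (simp add: cz cis_cnj)
    finally show ?thesis .
  qed
  have "complex_of_real (\<Prod>k<N. cosh t - cos (\<psi> + 2 * pi * real k / real N))
      = (\<Prod>k<N. (z - cis (\<psi> + 2 * pi * real k / real N)) * (z - cis (- (\<psi> + 2 * pi * real k / real N))) / (2 * z))"
    unfolding of_real_prod z_def by (intro prod.cong refl cosh_cos_complex)
  also have "\<dots> = (\<Prod>k<N. z - cis (\<psi> + 2 * pi * real k / real N)) * (\<Prod>k<N. z - cis (- (\<psi> + 2 * pi * real k / real N))) / (\<Prod>k<N. 2 * z)"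
    by (simp only: prod.distrib prod_dividef)
  also have "\<dots> = X / (2 * z) ^ N"
    by (simp only: P1 P2 X_def prod_constant card_lessThan)
  finally have L: "complex_of_real (\<Prod>k<N. cosh t - cos (\<psi> + 2 * pi * real k / real N)) = X / (2 * z) ^ N" .
  have "complex_of_real (cosh (real N * t) - cos (real N * \<psi>)) = X / (2 * z ^ N)"
    unfolding cosh_cos_complex X_def z_def by (simp add: exp_of_nat_mult of_real_power)
  also have "\<dots> = 2 ^ (N - 1) * (X / (2 * z) ^ N)"
    using N z0 by (cases N) (auto simp: field_simps power_mult_distrib)
  also have "\<dots> = complex_of_real (2 ^ (N - 1) * (\<Prod>k<N. cosh t - cos (\<psi> + 2 * pi * real k / real N)))"
    using L by simp
  finally show ?thesis by (simp only: of_real_eq_iff)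
qed

definition Fq :: "real \<Rightarrow> real \<Rightarrow> real \<Rightarrow> real" where
  "Fq x \<theta> \<phi> = x - (1 + cos \<theta> + cos \<phi> + cos (\<theta> + \<phi>)) / 2"

definition ang :: "nat \<Rightarrow> nat \<Rightarrow> real" where
  "ang n j = pi * (2 * real j + 1) / (2 * real n)"

lemma Fq_sym: "Fq x \<theta> \<phi> = Fq x \<phi> \<theta>"
  unfolding Fq_def by (simp add: add.commute add.left_commute)

lemma Fq_nonneg: assumes "x \<ge> 2" shows "Fq x \<theta> \<phi> \<ge> 0"
proof -
  have "1 + cos \<theta> + cos \<phi> + cos (\<theta> + \<phi>) \<le> 4"
    using cos_le_one[of \<theta>] cos_le_one[of \<phi>] cos_le_one[of "\<theta>+\<phi>"] by linarith
  thus ?thesis unfolding Fq_def using assms by simp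
qed

lemma refl_prod:
  fixes g :: "nat \<Rightarrow> real"
  assumes "\<And>j. j < 2 * n \<Longrightarrow> g (2 * n - 1 - j) = g j"
  shows "(\<Prod>j<2 * n. g j) = (\<Prod>j<n. g j) ^ 2"
proof -
  have U: "{..<2*n} = {..<n} \<union> {n..<2*n}" by auto
  have "(\<Prod>j<2 * n. g j) = (\<Prod>j<n. g j) * (\<Prod>j\<in>{n..<2*n}. g j)"
    unfolding U by (rule prod.union_disjoint) auto
  also have "(\<Prod>j\<in>{n..<2*n}. g j) = (\<Prod>j<n. g (2 * n - 1 - j))"
    by (rule prod.reindex_bij_witness[of _ "\<lambda>j. 2 * n - 1 - j" "\<lambda>j. 2 * n - 1 - j"]) auto
  also have "\<dots> = (\<Prod>j<n. g j)"
    using assms by (intro prod.cong refl) auto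
  finally show ?thesis by (simp add: power2_eq_square)
qed

lemma ang_refl:
  assumes "n > 0" "j < 2 * n"
  shows "ang n (2 * n - 1 - j) = 2 * pi - ang n j"
proof -
  have "real (2 * n - 1 - j) = 2 * real n - 1 - real j" using assms by (simp add: of_nat_diff)
  thus ?thesis using assms unfolding ang_def by (simp add: field_simps)
qed

lemma Fq_refl: "Fq x (2 * pi - \<theta>) (2 * pi - \<phi>) = Fq x \<theta> \<phi>"
proof -
  have c2: "cos (2 * pi - y) = cos y" for y by (simp add: cos_diff)
  have e: "2 * pi - \<theta> + (2 * pi - \<phi>) = 2 * pi - (\<theta> + \<phi> - 2 * pi)" by simp
  have "cos (2 * pi - \<theta> + (2 * pi - \<phi>)) = cos (\<theta> + \<phi> - 2 * pi)"
    unfolding e by (rule c2)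
  also have "\<dots> = cos (\<theta> + \<phi>)" by (simp add: cos_diff)
  finally have "cos (2 * pi - \<theta> + (2 * pi - \<phi>)) = cos (\<theta> + \<phi>)" .
  thus ?thesis unfolding Fq_def c2 by simp
qed

lemma T_eq:
  assumes "n > 0" "m > 0"
  shows "(\<Prod>j<2*n. \<Prod>k<2*m. Fq x (ang n j) (ang m k)) = (\<Prod>j<n. \<Prod>k<2*m. Fq x (ang n j) (ang m k)) ^ 2"
proof (rule refl_prod)
  fix j assume j: "j < 2 * n"
  have "(\<Prod>k<2*m. Fq x (ang n (2 * n - 1 - j)) (ang m k))
      = (\<Prod>k<2*m. Fq x (ang n (2 * n - 1 - j)) (ang m (2 * m - Suc k)))"
    by (rule prod.nat_diff_reindex[symmetric])
  also have "\<dots> = (\<Prod>k<2*m. Fq x (ang n j) (ang m k))"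
  proof (intro prod.cong refl)
    fix k assume "k \<in> {..<2*m}"
    hence k: "k < 2 * m" by simp
    have "2 * m - Suc k = 2 * m - 1 - (k::nat)" by simp
    thus "Fq x (ang n (2 * n - 1 - j)) (ang m (2 * m - Suc k)) = Fq x (ang n j) (ang m k)"
      using ang_refl[OF assms(1) j] ang_refl[OF assms(2) k] Fq_refl by simp
  qed
  finally show "(\<Prod>k<2*m. Fq x (ang n (2 * n - 1 - j)) (ang m k)) = (\<Prod>k<2*m. Fq x (ang n j) (ang m k))" .
qed

lemma P_sym:
  assumes "n > 0" "m > 0" "x \<ge> 2"
  shows "(\<Prod>j<n. \<Prod>k<2*m. Fq x (ang n j) (ang m k)) = (\<Prod>k<m. \<Prod>j<2*n. Fq x (ang m k) (ang n j))"
proof -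
  have "(\<Prod>j<2*n. \<Prod>k<2*m. Fq x (ang n j) (ang m k)) = (\<Prod>k<2*m. \<Prod>j<2*n. Fq x (ang m k) (ang n j))"
    by (subst prod.swap) (simp add: Fq_sym)
  hence sq: "(\<Prod>j<n. \<Prod>k<2*m. Fq x (ang n j) (ang m k)) ^ 2 = (\<Prod>k<m. \<Prod>j<2*n. Fq x (ang m k) (ang n j)) ^ 2"
    using T_eq[OF assms(1,2), of x] T_eq[OF assms(2,1), of x] by simp
  have "(\<Prod>j<n. \<Prod>k<2*m. Fq x (ang n j) (ang m k)) \<ge> 0"
    using Fq_nonneg[OF assms(3)] by (intro prod_nonneg) auto
  moreover have "(\<Prod>k<m. \<Prod>j<2*n. Fq x (ang m k) (ang n j)) \<ge> 0"
    using Fq_nonneg[OF assms(3)] by (intro prod_nonneg) auto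
  ultimately show ?thesis using sq by (simp add: power2_eq_iff_nonneg)
qed

lemma trig_key:
  fixes a b :: real
  shows "cos a * cos a + cos a * cos (a + b) = (1 + cos (2 * a) + cos b + cos (2 * a + b)) / 2"
proof -
  have c2: "cos (2 * a) = 2 * cos a ^ 2 - 1" by (rule cos_double_cos)
  have s2: "sin (2 * a) = 2 * sin a * cos a" by (rule sin_double)
  show ?thesis
    unfolding cos_add[of "2 * a" b] cos_add[of a b] c2 s2 by (simp add: algebra_simps power2_eq_square)
qed

lemma term_lemma:
  assumes m: "m > 0" and c: "cos a > 0" and h: "cosh (\<alpha> / 2) = x / cos a - cos a"
  shows "cosh (real m * \<alpha>) + cos (2 * real m * a)
       = 2 ^ (2 * m - 1) * (\<Prod>k<2 * m. Fq x (2 * a) (ang m k)) / cos a ^ (2 * m)"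
proof -
  have N: "2 * m > 0" using m by simp
  note ch = cheb[OF N, of "\<alpha> / 2" "a + pi / (2 * real m)"]
  have e1: "real (2 * m) * (\<alpha> / 2) = real m * \<alpha>" by simp
  have "real (2 * m) * (a + pi / (2 * real m)) = 2 * real m * a + pi" using m by (simp add: field_simps)
  hence e2: "cos (real (2 * m) * (a + pi / (2 * real m))) = - cos (2 * real m * a)" by simp
  have fac: "cosh (\<alpha> / 2) - cos (a + pi / (2 * real m) + 2 * pi * real k / real (2 * m))
      = Fq x (2 * a) (ang m k) / cos a" for k
  proof -
    have ae: "a + pi / (2 * real m) + 2 * pi * real k / real (2 * m) = a + ang m k"
      using m unfolding ang_def by (simp add: field_simps)
    have "cos (a + pi / (2 * real m) + 2 * pi * real k / real (2 * m)) = cos (a + ang m k)"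
      by (simp only: ae)
    hence "cosh (\<alpha> / 2) - cos (a + pi / (2 * real m) + 2 * pi * real k / real (2 * m))
        = x / cos a - cos a - cos (a + ang m k)" using h by simp
    also have "\<dots> = (x - (cos a * cos a + cos a * cos (a + ang m k))) / cos a"
      using c by (simp add: field_simps)
    also have "\<dots> = Fq x (2 * a) (ang m k) / cos a"
      unfolding trig_key Fq_def by simp
    finally show ?thesis .
  qed
  have "cosh (real m * \<alpha>) + cos (2 * real m * a) = 2 ^ (2 * m - 1) * (\<Prod>k<2 * m. Fq x (2 * a) (ang m k) / cos a)"
    using ch unfolding e1 e2 fac by simp
  also have "\<dots> = 2 ^ (2 * m - 1) * (\<Prod>k<2 * m. Fq x (2 * a) (ang m k)) / cos a ^ (2 * m)"
    by (simp add: prod_dividef)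
  finally show ?thesis .
qed

lemma const_lemma:
  assumes n: "n > 0"
  shows "(\<Prod>j<n. cos (ang n j / 2)) ^ 2 * 2 ^ (2 * n - 1) = 1"
proof -
  define C where "C = (\<Prod>j<n. cos (ang n j / 2))"
  have N: "2 * n > 0" using n by simp
  note ch = cheb[OF N, of 0 "pi + pi / (2 * real n)"]
  have ee: "real (2 * n) * (pi + pi / (2 * real n)) = real (2 * n + 1) * pi" using n by (simp add: field_simps)
  have "cos (real (2 * n + 1) * pi) = -1" by (simp only: cos_npi) simp
  hence e: "cos (real (2 * n) * (pi + pi / (2 * real n))) = -1" by (simp only: ee)
  have fac: "cosh 0 - cos (pi + pi / (2 * real n) + 2 * pi * real k / real (2 * n)) = 2 * cos (ang n k / 2) ^ 2" for k
  proof -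
    have ae: "pi + pi / (2 * real n) + 2 * pi * real k / real (2 * n) = pi + 2 * (ang n k / 2)"
      using n unfolding ang_def by (simp add: field_simps)
    have "cos (pi + pi / (2 * real n) + 2 * pi * real k / real (2 * n)) = - cos (2 * (ang n k / 2))"
      by (simp only: ae cos_periodic_pi2)
    thus ?thesis unfolding cos_double_cos by simp
  qed
  have "2 = 2 ^ (2 * n - 1) * (\<Prod>k<2 * n. 2 * cos (ang n k / 2) ^ 2)"
    using ch unfolding e fac by simp
  also have "(\<Prod>k<2 * n. 2 * cos (ang n k / 2) ^ 2) = 2 ^ (2 * n) * (\<Prod>k<2 * n. cos (ang n k / 2) ^ 2)"
    by (simp add: prod.distrib)
  also have "(\<Prod>k<2 * n. cos (ang n k / 2) ^ 2) = (\<Prod>k<n. cos (ang n k / 2) ^ 2) ^ 2"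
  proof (rule refl_prod)
    fix j assume j: "j < 2 * n"
    have ae: "ang n (2 * n - 1 - j) / 2 = pi - ang n j / 2" using ang_refl[OF n j] by simp
    have "cos (ang n (2 * n - 1 - j) / 2) = - cos (ang n j / 2)" by (simp only: ae cos_pi_minus)
    thus "cos (ang n (2 * n - 1 - j) / 2) ^ 2 = cos (ang n j / 2) ^ 2" by simp
  qed
  also have "(\<Prod>k<n. cos (ang n k / 2) ^ 2) = C ^ 2" unfolding C_def by (simp add: prod_power_distrib)
  finally have E: "2 = 2 ^ (2 * n - 1) * (2 ^ (2 * n) * (C ^ 2) ^ 2)" .
  obtain n' where n': "n = Suc n'" using n by (cases n) auto
  define K :: real where "K = 2 ^ (2 * n - 1)"
  have p: "(2::real) ^ (2 * n - 1) * 2 ^ (2 * n) = 2 * K ^ 2"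
    unfolding K_def n' by (simp add: power_add power2_eq_square)
  have E2: "2 = 2 * (K ^ 2 * (C ^ 2) ^ 2)" using E p by (simp only: mult.assoc[symmetric])
  have "(C ^ 2 * 2 ^ (2 * n - 1)) ^ 2 = K ^ 2 * (C ^ 2) ^ 2" unfolding K_def by (simp add: power_mult_distrib)
  also have "\<dots> = 1" using E2 by simp
  finally have "(C ^ 2 * 2 ^ (2 * n - 1)) ^ 2 = 1" .
  moreover have "C ^ 2 * 2 ^ (2 * n - 1) \<ge> 0" by simp
  ultimately have "C ^ 2 * 2 ^ (2 * n - 1) = 1"
    using power2_eq_1_iff[of "C ^ 2 * 2 ^ (2 * n - 1)"] by linarith
  thus ?thesis unfolding C_def .
qed

lemma side:
  fixes m n :: nat and x :: real and \<alpha> :: "nat \<Rightarrow> real"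
  assumes m: "m > 0" and n: "n > 0" and x: "x \<ge> 2"
    and h: "\<And>j. 1 \<le> j \<Longrightarrow> j \<le> n \<Longrightarrow> \<alpha> j \<ge> 0 \<and>
           cosh (\<alpha> j / 2) = x / cos (pi * (2 * real j - 1) / (4 * real n)) - cos (pi * (2 * real j - 1) / (4 * real n))"
  shows "(\<Prod>j=1..n. cosh (real m * \<alpha> j) + cos (real m * pi * (2 * real j - 1) / (2 * real n)))
       = 2 ^ (n * (2 * m - 1)) * 2 ^ (m * (2 * n - 1)) * (\<Prod>j<n. \<Prod>k<2*m. Fq x (ang n j) (ang m k))"
proof -
  define C where "C = (\<Prod>j<n. cos (ang n j / 2))"
  have "(\<Prod>j=1..n. cosh (real m * \<alpha> j) + cos (real m * pi * (2 * real j - 1) / (2 * real n)))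
      = (\<Prod>j<n. cosh (real m * \<alpha> (Suc j)) + cos (real m * pi * (2 * real (Suc j) - 1) / (2 * real n)))"
    unfolding One_nat_def by (rule prod.atLeast1_atMost_eq)
  also have "\<dots> = (\<Prod>j<n. 2 ^ (2 * m - 1) * (\<Prod>k<2 * m. Fq x (ang n j) (ang m k)) / cos (ang n j / 2) ^ (2 * m))"
  proof (intro prod.cong refl)
    fix j assume "j \<in> {..<n}"
    hence j: "j < n" by simp
    have a1: "pi * (2 * real (Suc j) - 1) / (4 * real n) = ang n j / 2"
      unfolding ang_def by (simp add: field_simps)
    have "real (2 * j + 1) < real (2 * n)" using j by linarith
    hence "pi * (2 * real j + 1) < pi * (2 * real n)"
      using pi_gt_zero by (intro mult_strict_left_mono) simp_all
    hence "ang n j < pi" unfolding ang_def using n by (simp add: pos_divide_less_eq)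
    moreover have "ang n j > 0" unfolding ang_def using n by simp
    ultimately have cpos: "cos (ang n j / 2) > 0" by (intro cos_gt_zero_pi) auto
    have hj: "cosh (\<alpha> (Suc j) / 2) = x / cos (ang n j / 2) - cos (ang n j / 2)"
      using h[of "Suc j"] j unfolding a1 by simp
    have a2: "2 * real m * (ang n j / 2) = real m * pi * (2 * real (Suc j) - 1) / (2 * real n)"
      unfolding ang_def using n by (simp add: field_simps)
    have a3: "2 * (ang n j / 2) = ang n j" by simp
    show "cosh (real m * \<alpha> (Suc j)) + cos (real m * pi * (2 * real (Suc j) - 1) / (2 * real n))
        = 2 ^ (2 * m - 1) * (\<Prod>k<2 * m. Fq x (ang n j) (ang m k)) / cos (ang n j / 2) ^ (2 * m)"
      using term_lemma[OF m cpos hj] unfolding a2 a3 .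
  qed
  also have "\<dots> = (2 ^ (2 * m - 1)) ^ n * (\<Prod>j<n. \<Prod>k<2*m. Fq x (ang n j) (ang m k)) / (C ^ 2) ^ m"
    unfolding C_def by (simp add: prod.distrib prod_dividef prod_power_distrib power_mult[symmetric] mult.commute)
  also have "(C ^ 2) ^ m = 1 / (2 ^ (2 * n - 1)) ^ m"
  proof -
    have "(C ^ 2) ^ m * (2 ^ (2 * n - 1)) ^ m = (C ^ 2 * 2 ^ (2 * n - 1)) ^ m"
      by (simp only: power_mult_distrib)
    also have "\<dots> = 1" using const_lemma[OF n] unfolding C_def[symmetric] by simp
    finally show ?thesis by (simp add: field_simps)
  qed
  finally show ?thesis by (simp add: power_mult[symmetric] mult.commute)
qed

theorem mainTheorem13:
  fixes m n :: nat and x :: real and \<alpha> \<beta> :: "nat \<Rightarrow> real"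
  assumes "m > 0" and "n > 0" and "x \<ge> 2"
    and "\<And>j. 1 \<le> j \<Longrightarrow> j \<le> n \<Longrightarrow> \<alpha> j \<ge> 0 \<and>
           cosh (\<alpha> j / 2) = x / cos (pi * (2 * real j - 1) / (4 * real n)) - cos (pi * (2 * real j - 1) / (4 * real n))"
    and "\<And>k. 1 \<le> k \<Longrightarrow> k \<le> m \<Longrightarrow> \<beta> k \<ge> 0 \<and>
           cosh (\<beta> k / 2) = x / cos (pi * (2 * real k - 1) / (4 * real m)) - cos (pi * (2 * real k - 1) / (4 * real m))"
  shows "(\<Prod>j=1..n. cosh (real m * \<alpha> j) + cos (real m * pi * (2 * real j - 1) / (2 * real n)))
       = (\<Prod>k=1..m. cosh (real n * \<beta> k) + cos (real n * pi * (2 * real k - 1) / (2 * real m)))"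
proof -
  have "(\<Prod>j=1..n. cosh (real m * \<alpha> j) + cos (real m * pi * (2 * real j - 1) / (2 * real n)))
       = 2 ^ (n * (2 * m - 1)) * 2 ^ (m * (2 * n - 1)) * (\<Prod>j<n. \<Prod>k<2*m. Fq x (ang n j) (ang m k))"
    by (rule side[OF assms(1,2,3,4)])
  also have "\<dots> = 2 ^ (m * (2 * n - 1)) * 2 ^ (n * (2 * m - 1)) * (\<Prod>k<m. \<Prod>j<2*n. Fq x (ang m k) (ang n j))"
    unfolding P_sym[OF assms(2,1,3)] by (simp only: ac_simps)
  also have "\<dots> = (\<Prod>k=1..m. cosh (real n * \<beta> k) + cos (real n * pi * (2 * real k - 1) / (2 * real m)))"
    by (rule side[OF assms(2,1,3,5), symmetric])
  finally show ?thesis .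
qed

end
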